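(* Fix integers $k,r\ge 1$ and $n\ge 0$, and let $\rho(k,r)$ be the density on the two-row shape $(n+1)^2=(n+1,n+1)$ given by $\rho_{1,j}=1$ for $1\le j\le n+1$, $\rho_{2,1}=r-1$, and $\rho_{2,j}=k-1$ for $2\le j\le n+1$. Then $$R_{k,r}(n)=\frac{r}{kn+r}\binom{kn+r}{n}=\bigl|\mathrm{SVT}((n+1)^2,\rho(k,r))\bigr|.$$
   Context: A density on a shape $\lambda$ is an assignment of a nonnegative integer $\rho_{i,j}$ to every cell $(i,j)$ (row $i$, column $j$); let $N=\sum\rho_{i,j}$. A standard set-valued Young tableau of shape $\lambda$ and density $\rho$ assigns to each cell $(i,j)$ a set $S_{i,j}$ with $|S_{i,j}|=\rho_{i,j}$, the sets partitioning $[N]$, such that every element of $S_{i,j}$ is smaller than every element of $S_{i,j+1}$ and of $S_{i+1,j}$ whenever those cells exist (conditions involving an empty set are vacuous). $\mathrm{SVT}(\lambda,\rho)$ is the set of these tableaux. *)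

theory Defs
  imports Complex_Main
begin

text \<open>A shape is a list of row lengths; cells are 1-indexed (row i, column j).\<close>
definition cells :: "nat list \<Rightarrow> (nat \<times> nat) set" where
  "cells lam = {(i, j). 1 \<le> i \<and> i \<le> length lam \<and> 1 \<le> j \<and> j \<le> lam ! (i - 1)}"

text \<open>Standard set-valued Young tableaux of shape lam and density rho
  (rho is only consulted on the cells of lam).  A tableau is a map from cells
  to sets of positive integers, empty outside the shape.\<close>
definition SVT :: "nat list \<Rightarrow> (nat \<times> nat \<Rightarrow> nat) \<Rightarrow> (nat \<times> nat \<Rightarrow> nat set) set" where
  "SVT lam rho = {S.
     (\<forall>c. c \<notin> cells lam \<longrightarrow> S c = {}) \<and>
     (\<forall>c\<in>cells lam. finite (S c) \<and> card (S c) = rho c) \<and>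
     (\<forall>c\<in>cells lam. \<forall>d\<in>cells lam. c \<noteq> d \<longrightarrow> S c \<inter> S d = {}) \<and>
     (\<Union>c\<in>cells lam. S c) = {1 .. (\<Sum>c\<in>cells lam. rho c)} \<and>
     (\<forall>i j. (i, j) \<in> cells lam \<and> (i, j + 1) \<in> cells lam \<longrightarrow>
        (\<forall>a\<in>S (i, j). \<forall>b\<in>S (i, j + 1). a < b)) \<and>
     (\<forall>i j. (i, j) \<in> cells lam \<and> (i + 1, j) \<in> cells lam \<longrightarrow>
        (\<forall>a\<in>S (i, j). \<forall>b\<in>S (i + 1, j). a < b))}"

definition rho_kr :: "nat \<Rightarrow> nat \<Rightarrow> nat \<times> nat \<Rightarrow> nat" where
  "rho_kr k r c = (if fst c = 1 then 1 else if snd c = 1 then r - 1 else k - 1)"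

definition raney :: "nat \<Rightarrow> nat \<Rightarrow> nat \<Rightarrow> real" where
  "raney k r n = real r / real (k * n + r) * real ((k * n + r) choose n)"

end

theory Submission
  imports Defs
begin


fun Rz :: "nat \<Rightarrow> nat \<Rightarrow> nat \<Rightarrow> int" where
  "Rz k 0 r = 1"
| "Rz k (Suc n) r = int ((k*Suc n + r) choose Suc n) - int k * int ((k*Suc n + r - 1) choose n)"

lemma Rz_zero: assumes "k \<ge> 1" shows "Rz k (Suc n) 0 = 0"
proof -
  obtain m where m: "k * Suc n = Suc m" using assms by (metis Suc_pred mult_pos_pos not_one_le_zero not_less_eq_eq zero_less_Suc zero_less_iff_neq_zero)
  have "Suc n * (Suc m choose Suc n) = Suc m * (m choose n)" by (rule Suc_times_binomial)
  also have "\<dots> = Suc n * (k * (m choose n))" using m by (metis mult.assoc mult.commute)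
  finally have "(Suc m choose Suc n) = k * (m choose n)" by (metis mult_left_cancel nat.distinct(1))
  thus ?thesis using m by simp
qed

lemma Rz_step: assumes "k \<ge> 1" shows "Rz k (Suc n) (Suc c) = Rz k n (c + k) + Rz k (Suc n) c"
proof -
  obtain m where m: "k * Suc n + c = Suc m" using assms by (metis Suc_pred add_gr_0 mult_pos_pos not_one_le_zero not_less_eq_eq zero_less_Suc zero_less_iff_neq_zero)
  have e1: "int (Suc (Suc m) choose Suc n) = int (Suc m choose n) + int (Suc m choose Suc n)" by simp
  show ?thesis
  proof (cases n)
    case 0
    then show ?thesis using m by simp
  next
    case (Suc n')
    have e2: "int (Suc m choose Suc n') = int (m choose n') + int (m choose Suc n')" by simp
    have e3: "k * Suc n' + (c + k) = Suc m" using m Suc by (simp add: algebra_simps)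
    have e4: "k * Suc n + Suc c = Suc (Suc m)" using m by simp
    show ?thesis using m Suc e1 e2 e3 e4 by (simp del: binomial_Suc_Suc add: algebra_simps)
  qed
qed

lemma raney_Rz: assumes "r \<ge> 1" "k \<ge> 1" shows "raney k r n = real_of_int (Rz k n r)"
proof (cases n)
  case 0
  then show ?thesis using assms by (simp add: raney_def)
next
  case (Suc n')
  obtain m where m: "k * n + r = Suc m" using assms by (metis add_gr_0 gr0_conv_Suc less_le_trans zero_less_one)
  have b: "real (Suc m choose Suc n') * real (Suc n') = real (Suc m) * real (m choose n')"
    using Suc_times_binomial_eq[of m n'] by (metis mult.commute of_nat_mult)
  have "raney k r n = real r / real (Suc m) * real (Suc m choose Suc n')" using m Suc by (simp add: raney_def)
  also have "\<dots> = real (Suc m choose Suc n') - real k * real (m choose n')"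
  proof -
    have r: "real r = real (Suc m) - real k * real (Suc n')" using m Suc by (simp add: algebra_simps) (metis of_nat_add of_nat_mult add_diff_cancel_left' of_nat_Suc)
    have "real r * real (Suc m choose Suc n') = real (Suc m) * real (Suc m choose Suc n') - real k * (real (Suc m choose Suc n') * real (Suc n'))"
      by (simp del: binomial_Suc_Suc of_nat_Suc add: r algebra_simps)
    also have "\<dots> = real (Suc m) * (real (Suc m choose Suc n') - real k * real (m choose n'))"
      using b by (simp del: binomial_Suc_Suc of_nat_Suc add: algebra_simps)
    finally show ?thesis by (simp add: field_simps del: of_nat_Suc)
  qed
  also have "\<dots> = real_of_int (Rz k n r)" using m Suc by simp
  finally show ?thesis .
qed


definition Wd :: "nat \<Rightarrow> nat \<Rightarrow> nat \<Rightarrow> bool list set" where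
  "Wd kk n c = {w. length (filter id w) = n \<and> length (filter Not w) = c + n*kk \<and>
     (\<forall>t. length (filter Not (take t w)) \<le> c + length (filter id (take t w)) * kk)}"

lemma Wd_finite: "finite (Wd kk n c)"
proof -
  have "Wd kk n c \<subseteq> {w. set w \<subseteq> UNIV \<and> length w = n + (c + n*kk)}"
  proof
    fix w assume "w \<in> Wd kk n c"
    moreover have "length (filter id w) + length (filter Not w) = length w" by (induction w) auto
    ultimately show "w \<in> {w. set w \<subseteq> UNIV \<and> length w = n + (c + n*kk)}" unfolding Wd_def by auto
  qed
  thus ?thesis using finite_lists_length_eq[of "UNIV::bool set"] finite_subset by fastforce
qed

lemma Wd_Nil: "[] \<in> Wd kk n c \<longleftrightarrow> n = 0 \<and> c = 0"
  by (auto simp: Wd_def)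

lemma Wd_True:
  shows "True # w \<in> Wd kk n c \<longleftrightarrow> (\<exists>n'. n = Suc n' \<and> w \<in> Wd kk n' (c+kk))"
proof
  assume h: "True # w \<in> Wd kk n c"
  then obtain n' where n: "n = Suc n'" by (cases n) (auto simp: Wd_def)
  have "\<forall>t. length (filter Not (take t w)) \<le> (c+kk) + length (filter id (take t w)) * kk"
  proof
    fix t
    have "length (filter Not (take (Suc t) (True#w))) \<le> c + length (filter id (take (Suc t) (True#w))) * kk"
      using h unfolding Wd_def by blast
    thus "length (filter Not (take t w)) \<le> (c+kk) + length (filter id (take t w)) * kk"
      by (simp add: algebra_simps)
  qed
  moreover have "length (filter id w) = n'" using h n by (auto simp: Wd_def)
  moreover have "length (filter Not w) = (c+kk) + n'*kk" using h n
    by (auto simp: Wd_def algebra_simps)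
  ultimately show "\<exists>n'. n = Suc n' \<and> w \<in> Wd kk n' (c+kk)" using n by (simp add: Wd_def)
next
  assume "\<exists>n'. n = Suc n' \<and> w \<in> Wd kk n' (c+kk)"
  then obtain n' where n: "n = Suc n'" and h: "w \<in> Wd kk n' (c+kk)" by blast
  have "\<forall>t. length (filter Not (take t (True#w))) \<le> c + length (filter id (take t (True#w))) * kk"
  proof
    fix t show "length (filter Not (take t (True#w))) \<le> c + length (filter id (take t (True#w))) * kk"
    proof (cases t)
      case (Suc t')
      have "length (filter Not (take t' w)) \<le> (c+kk) + length (filter id (take t' w)) * kk"
        using h unfolding Wd_def by blast
      then show ?thesis using Suc by (simp add: algebra_simps)
    qed simp
  qed
  then show "True # w \<in> Wd kk n c" using h n by (auto simp: Wd_def algebra_simps)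
qed

lemma Wd_False:
  shows "False # w \<in> Wd kk n c \<longleftrightarrow> (\<exists>c'. c = Suc c' \<and> w \<in> Wd kk n c')"
proof
  assume h: "False # w \<in> Wd kk n c"
  have "length (filter Not (take 1 (False#w))) \<le> c + length (filter id (take 1 (False#w))) * kk"
    using h unfolding Wd_def by blast
  then obtain c' where c: "c = Suc c'" by (cases c) auto
  have "\<forall>t. length (filter Not (take t w)) \<le> c' + length (filter id (take t w)) * kk"
  proof
    fix t
    have "length (filter Not (take (Suc t) (False#w))) \<le> c + length (filter id (take (Suc t) (False#w))) * kk"
      using h unfolding Wd_def by blast
    thus "length (filter Not (take t w)) \<le> c' + length (filter id (take t w)) * kk"
      using c by simp
  qed
  then show "\<exists>c'. c = Suc c' \<and> w \<in> Wd kk n c'" using h c by (auto simp: Wd_def)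
next
  assume "\<exists>c'. c = Suc c' \<and> w \<in> Wd kk n c'"
  then obtain c' where c: "c = Suc c'" and h: "w \<in> Wd kk n c'" by blast
  have "\<forall>t. length (filter Not (take t (False#w))) \<le> c + length (filter id (take t (False#w))) * kk"
  proof
    fix t show "length (filter Not (take t (False#w))) \<le> c + length (filter id (take t (False#w))) * kk"
    proof (cases t)
      case (Suc t')
      have "length (filter Not (take t' w)) \<le> c' + length (filter id (take t' w)) * kk"
        using h unfolding Wd_def by blast
      then show ?thesis using Suc c by simp
    qed simp
  qed
  then show "False # w \<in> Wd kk n c" using h c by (auto simp: Wd_def)
qed

lemma Wd_decomp:
  shows "Wd kk n c = (if n = 0 \<and> c = 0 then {[]} else {}) \<union>
     (case n of 0 \<Rightarrow> {} | Suc n' \<Rightarrow> Cons True ` Wd kk n' (c+kk)) \<union>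
     (case c of 0 \<Rightarrow> {} | Suc c' \<Rightarrow> Cons False ` Wd kk n c')" (is "_ = ?R")
proof (rule set_eqI)
  fix w show "w \<in> Wd kk n c \<longleftrightarrow> w \<in> ?R"
  proof (cases w)
    case Nil then show ?thesis using Wd_Nil[of kk n c] by (auto split: nat.splits)
  next
    case (Cons b w')
    then show ?thesis using Wd_True[of w' kk n c] Wd_False[of w' kk n c]
      by (cases b) (auto split: nat.splits)
  qed
qed

lemma card_Wd: "int (card (Wd kk n c)) = Rz (Suc kk) n (Suc c)"
proof (induction n arbitrary: c)
  case 0
  show ?case
  proof (induction c)
    case 0
    then show ?case by (subst Wd_decomp) simp
  next
    case (Suc c)
    have "Wd kk 0 (Suc c) = Cons False ` Wd kk 0 c" by (subst Wd_decomp) simp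
    then show ?case using Suc by (simp add: card_image)
  qed
next
  case (Suc n)
  note outer = Suc.IH
  show ?case
  proof (induction c)
    case 0
    have "Wd kk (Suc n) 0 = Cons True ` Wd kk n kk" by (subst Wd_decomp) simp
    then show ?case using outer[of "kk"] Rz_step[of "Suc kk" n 0] Rz_zero[of "Suc kk" n]
      by (simp add: card_image)
  next
    case (Suc c)
    have "Wd kk (Suc n) (Suc c) = Cons True ` Wd kk n (Suc c+kk) \<union> Cons False ` Wd kk (Suc n) c"
      by (subst Wd_decomp) simp
    moreover have "card (Cons True ` Wd kk n (Suc c+kk) \<union> Cons False ` Wd kk (Suc n) c)
       = card (Cons True ` Wd kk n (Suc c+kk)) + card (Cons False ` Wd kk (Suc n) c)"
      by (rule card_Un_disjoint) (auto simp: Wd_finite)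
    ultimately have "card (Wd kk (Suc n) (Suc c)) = card (Wd kk n (Suc c+kk)) + card (Wd kk (Suc n) c)"
      by (simp add: card_image)
    then show ?case using outer[of "Suc c+kk"] Rz_step[of "Suc kk" n "Suc c"] Suc.IH
      by simp
  qed
qed


definition hs :: "nat \<Rightarrow> nat \<Rightarrow> nat \<Rightarrow> nat" where
  "hs kk r' u = (\<Sum>j\<in>{1..u}. rho_kr (Suc kk) (Suc r') (2, j))"

lemma hs_0[simp]: "hs kk r' 0 = 0" by (simp add: hs_def)
lemma hs_Suc: "hs kk r' (Suc u) = r' + u * kk"
  by (induction u) (auto simp: hs_def rho_kr_def)

definition NN :: "nat \<Rightarrow> nat \<Rightarrow> nat \<Rightarrow> nat" where
  "NN kk r' n = Suc n + r' + n * kk"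

definition VA :: "nat \<Rightarrow> nat \<Rightarrow> nat \<Rightarrow> nat set set" where
  "VA kk r' n = {A. A \<subseteq> {1..NN kk r' n} \<and> 1 \<in> A \<and> card A = Suc n \<and>
     (\<forall>t\<le>NN kk r' n. card ({1..t} - A) \<le> hs kk r' (card (A \<inter> {1..t})))}"

definition word :: "nat \<Rightarrow> nat set \<Rightarrow> bool list" where
  "word N A = map (\<lambda>x. x \<in> A) [2..<Suc N]"

lemma len_filter_map: "length (filter id (map P xs)) = length (filter P xs)"
  by (induction xs) auto
lemma len_filter_map_Not: "length (filter Not (map P xs)) = length (filter (\<lambda>x. \<not> P x) xs)"
  by (induction xs) auto

lemma word_count:
  assumes "t < N"
  shows "length (filter id (take t (word N A))) = card (A \<inter> {2..Suc t})"
    and "length (filter Not (take t (word N A))) = card ({2..Suc t} - A)"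
proof -
  have tk: "take t (word N A) = map (\<lambda>x. x \<in> A) [2..<t+2]"
    using assms by (simp add: word_def take_map take_upt min_def del: upt_Suc)
  have s1: "{x. x \<in> A} \<inter> set [2..<t+2] = A \<inter> {2..Suc t}" by auto
  have s2: "{x. x \<notin> A} \<inter> set [2..<t+2] = {2..Suc t} - A" by auto
  show "length (filter id (take t (word N A))) = card (A \<inter> {2..Suc t})"
    unfolding tk len_filter_map distinct_length_filter[OF distinct_upt] s1 ..
  show "length (filter Not (take t (word N A))) = card ({2..Suc t} - A)"
    unfolding tk len_filter_map_Not distinct_length_filter[OF distinct_upt] s2 ..
qed

lemma word_take_big: "t \<ge> N - 1 \<Longrightarrow> take t (word N A) = take (N - 1) (word N A)"
  by (simp add: word_def del: upt_Suc)

lemma VA_iff_word: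
  assumes A: "A \<subseteq> {1..NN kk r' n}" "1 \<in> A"
  shows "A \<in> VA kk r' n \<longleftrightarrow> word (NN kk r' n) A \<in> Wd kk n r'"
proof -
  let ?N = "NN kk r' n"
  let ?w = "word ?N A"
  have Npos: "?N \<ge> 1" by (simp add: NN_def)
  have full: "take (?N - 1) ?w = ?w" by (simp add: word_def del: upt_Suc)
  have ins: "A = insert 1 (A \<inter> {2..?N})" using A by auto
  have cardA: "card A = Suc (card (A \<inter> {2..?N}))"
    by (subst ins) (simp add: card_insert_if)
  have Tc: "length (filter id ?w) = card (A \<inter> {2..?N})"
    using word_count(1)[of "?N - 1" ?N A] Npos full by simp
  have Fc: "length (filter Not ?w) = card ({2..?N} - A)"
    using word_count(2)[of "?N - 1" ?N A] Npos full by simp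
  have cardC: "card ({2..?N} - A) = (?N - 1) - card (A \<inter> {2..?N})"
    using card_Diff_subset_Int[of "{2..?N}" A] by (simp add: Int_commute)
  have key: "\<And>t. t < ?N \<Longrightarrow> card ({1..Suc t} - A) = card ({2..Suc t} - A) \<and>
      card (A \<inter> {1..Suc t}) = Suc (card (A \<inter> {2..Suc t}))"
  proof -
    fix t assume "t < ?N"
    have i: "{1..Suc t} = insert 1 {2..Suc t}" by auto
    have "{1..Suc t} - A = {2..Suc t} - A" using A unfolding i by auto
    moreover have "A \<inter> {1..Suc t} = insert 1 (A \<inter> {2..Suc t})" using A unfolding i by auto
    ultimately show "card ({1..Suc t} - A) = card ({2..Suc t} - A) \<and>
      card (A \<inter> {1..Suc t}) = Suc (card (A \<inter> {2..Suc t}))" by simp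
  qed
  show ?thesis
  proof
    assume h: "A \<in> VA kk r' n"
    have T: "length (filter id ?w) = n" using h Tc cardA by (simp add: VA_def)
    have F: "length (filter Not ?w) = r' + n * kk" using h Fc cardA cardC by (simp add: VA_def NN_def)
    have P: "length (filter Not (take t ?w)) \<le> r' + length (filter id (take t ?w)) * kk" for t
    proof -
      define t' where "t' = min t (?N - 1)"
      have tk: "take t ?w = take t' ?w" unfolding t'_def by (cases "t \<le> ?N - 1") (auto simp: word_def min_def simp del: upt_Suc)
      have t': "t' < ?N" using Npos unfolding t'_def by simp
      have "card ({1..Suc t'} - A) \<le> hs kk r' (card (A \<inter> {1..Suc t'}))"
        using h t' by (simp add: VA_def)
      thus ?thesis unfolding tk word_count[OF t'] using key[OF t'] by (simp add: hs_Suc)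
    qed
    show "?w \<in> Wd kk n r'" using T F P by (simp add: Wd_def)
  next
    assume h: "?w \<in> Wd kk n r'"
    have c: "card A = Suc n" using h Tc cardA by (simp add: Wd_def)
    have "card ({1..t} - A) \<le> hs kk r' (card (A \<inter> {1..t}))" if "t \<le> ?N" for t
    proof (cases t)
      case (Suc t')
      hence t': "t' < ?N" using that by simp
      have "length (filter Not (take t' ?w)) \<le> r' + length (filter id (take t' ?w)) * kk"
        using h by (simp add: Wd_def)
      thus ?thesis unfolding Suc using word_count[OF t'] key[OF t'] by (simp add: hs_Suc)
    qed simp
    thus "A \<in> VA kk r' n" using A c by (simp add: VA_def)
  qed
qed

lemma card_VA: "card (VA kk r' n) = card (Wd kk n r')"
proof -
  let ?N = "NN kk r' n"
  have "bij_betw (word ?N) (VA kk r' n) (Wd kk n r')"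
  proof (rule bij_betw_imageI)
    show "inj_on (word ?N) (VA kk r' n)"
    proof (rule inj_onI)
      fix A B assume a: "A \<in> VA kk r' n" "B \<in> VA kk r' n" and e: "word ?N A = word ?N B"
      show "A = B"
      proof (rule set_eqI)
        fix x
        show "x \<in> A \<longleftrightarrow> x \<in> B"
        proof (cases "x \<in> {2..?N}")
          case True
          hence x2: "Suc (Suc (x - 2)) = x" by auto
          from True have "word ?N A ! (x - 2) = (x \<in> A)" "word ?N B ! (x - 2) = (x \<in> B)"
            by (auto simp: word_def nth_map x2 simp del: upt_Suc)
          then show ?thesis using e by simp
        next
          case False
          then have "x = 1 \<or> x \<notin> {1..?N}" by auto
          then show ?thesis using a by (auto simp: VA_def)
        qed
      qed
    qed
    show "word ?N ` VA kk r' n = Wd kk n r'"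
    proof
      show "word ?N ` VA kk r' n \<subseteq> Wd kk n r'"
        using VA_iff_word by (auto simp: VA_def)
      show "Wd kk n r' \<subseteq> word ?N ` VA kk r' n"
      proof
        fix w assume w: "w \<in> Wd kk n r'"
        have lw: "length w = ?N - 1"
        proof -
          have "length (filter id w) + length (filter Not w) = length w" by (induction w) auto
          thus ?thesis using w by (simp add: Wd_def NN_def)
        qed
        define A where "A = insert 1 {x \<in> {2..?N}. w ! (x - 2)}"
        have As: "A \<subseteq> {1..?N}" "1 \<in> A" by (auto simp: A_def NN_def)
        have "word ?N A = w"
        proof (rule nth_equalityI)
          show "length (word ?N A) = length w" using lw by (simp add: word_def del: upt_Suc)
          fix i assume "i < length (word ?N A)"
          hence i: "i < ?N - 1" by (simp add: word_def del: upt_Suc)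
          hence "word ?N A ! i = (i + 2 \<in> A)" by (simp add: word_def nth_map del: upt_Suc)
          also have "\<dots> = w ! i" using i by (auto simp: A_def)
          finally show "word ?N A ! i = w ! i" .
        qed
        moreover have "A \<in> VA kk r' n" using VA_iff_word[OF As] w calculation by simp
        ultimately show "w \<in> word ?N ` VA kk r' n" by blast
      qed
    qed
  qed
  thus ?thesis by (rule bij_betw_same_card)
qed


lemma cells_eq: "cells [Suc n, Suc n] = {1,2} \<times> {1..Suc n}"
  unfolding cells_def by (auto simp: nth_Cons' split: if_splits)

lemma rho1[simp]: "rho_kr k r (1, j) = 1" by (simp add: rho_kr_def)
lemma rho1'[simp]: "rho_kr k r (Suc 0, j) = Suc 0" by (simp add: rho_kr_def)
lemma rho21[simp]: "rho_kr (Suc kk) (Suc r') (2, 1) = r'" by (simp add: rho_kr_def)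
lemma rho2[simp]: "j \<noteq> 1 \<Longrightarrow> rho_kr (Suc kk) (Suc r') (2, j) = kk" by (simp add: rho_kr_def)

lemma hs_Suc': "hs kk r' (Suc u) = hs kk r' u + rho_kr (Suc kk) (Suc r') (2, Suc u)"
  by (simp add: hs_def)

lemma hs_mono: "u \<le> v \<Longrightarrow> hs kk r' u \<le> hs kk r' v"
  by (induction v) (auto simp: hs_Suc' le_Suc_eq)

lemma sum_cells: "(\<Sum>c\<in>cells [Suc n, Suc n]. rho_kr (Suc kk) (Suc r') c) = NN kk r' n"
proof -
  have "(\<Sum>c\<in>cells [Suc n, Suc n]. rho_kr (Suc kk) (Suc r') c)
      = (\<Sum>j\<in>{1..Suc n}. rho_kr (Suc kk) (Suc r') (1,j)) + (\<Sum>j\<in>{1..Suc n}. rho_kr (Suc kk) (Suc r') (2,j))"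
  proof -
    have "\<And>J. sum (rho_kr (Suc kk) (Suc r')) ({1,2} \<times> J) = (\<Sum>x\<in>{1,2}. \<Sum>y\<in>J. rho_kr (Suc kk) (Suc r') (x,y))"
      by (simp add: sum.cartesian_product)
    thus ?thesis unfolding cells_eq by simp
  qed
  also have "\<dots> = Suc n + hs kk r' (Suc n)" by (simp add: hs_def rho_kr_def)
  finally show ?thesis by (simp add: hs_Suc NN_def)
qed

lemma rank_nth:
  fixes xs :: "nat list"
  assumes "sorted_wrt (<) xs" "m < length xs"
  shows "card {y \<in> set xs. y < xs ! m} = m"
proof -
  have "{y \<in> set xs. y < xs ! m} = (\<lambda>i. xs ! i) ` {..<m}"
  proof
    show "{y \<in> set xs. y < xs ! m} \<subseteq> (\<lambda>i. xs ! i) ` {..<m}"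
    proof
      fix y assume "y \<in> {y \<in> set xs. y < xs ! m}"
      then obtain i where i: "i < length xs" "y = xs ! i" "xs ! i < xs ! m" by (auto simp: in_set_conv_nth)
      have "i < m"
      proof (rule ccontr)
        assume "\<not> i < m"
        hence "m < i \<or> m = i" by auto
        thus False using sorted_wrt_nth_less[OF assms(1), of m i] i by auto
      qed
      thus "y \<in> (\<lambda>i. xs ! i) ` {..<m}" using i by auto
    qed
    show "(\<lambda>i. xs ! i) ` {..<m} \<subseteq> {y \<in> set xs. y < xs ! m}"
      using sorted_wrt_nth_less[OF assms(1)] assms(2) by auto
  qed
  moreover have "inj_on (\<lambda>i. xs ! i) {..<m}"
    using assms strict_sorted_iff[of xs] by (auto intro!: inj_onI simp: nth_eq_iff_index_eq)
  ultimately show ?thesis by (simp add: card_image)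
qed

context
  fixes kk r' n :: nat
begin

abbreviation "\<rho> \<equiv> rho_kr (Suc kk) (Suc r')"
abbreviation "NX \<equiv> NN kk r' n"
abbreviation "CL \<equiv> cells [Suc n, Suc n]"
abbreviation "SV \<equiv> SVT [Suc n, Suc n] \<rho>"

lemma memCL: "(i, j) \<in> CL \<longleftrightarrow> (i = 1 \<or> i = 2) \<and> 1 \<le> j \<and> j \<le> Suc n"
  unfolding cells_eq by auto

lemma SV_unf: assumes "S \<in> SV"
  shows "\<forall>c. c \<notin> CL \<longrightarrow> S c = {}"
   "\<forall>c\<in>CL. finite (S c) \<and> card (S c) = \<rho> c"
   "\<forall>c\<in>CL. \<forall>d\<in>CL. c \<noteq> d \<longrightarrow> S c \<inter> S d = {}"
   "(\<Union>c\<in>CL. S c) = {1 .. NX}"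
   "\<forall>i j. (i, j) \<in> CL \<and> (i, j + 1) \<in> CL \<longrightarrow> (\<forall>a\<in>S (i, j). \<forall>b\<in>S (i, j + 1). a < b)"
   "\<forall>i j. (i, j) \<in> CL \<and> (i + 1, j) \<in> CL \<longrightarrow> (\<forall>a\<in>S (i, j). \<forall>b\<in>S (i + 1, j). a < b)"
proof -
  have h: "(\<forall>c. c \<notin> CL \<longrightarrow> S c = {}) \<and>
   (\<forall>c\<in>CL. finite (S c) \<and> card (S c) = \<rho> c) \<and>
   (\<forall>c\<in>CL. \<forall>d\<in>CL. c \<noteq> d \<longrightarrow> S c \<inter> S d = {}) \<and>
   (\<Union>c\<in>CL. S c) = {1 .. NX} \<and>
   (\<forall>i j. (i, j) \<in> CL \<and> (i, j + 1) \<in> CL \<longrightarrow> (\<forall>a\<in>S (i, j). \<forall>b\<in>S (i, j + 1). a < b)) \<and>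
   (\<forall>i j. (i, j) \<in> CL \<and> (i + 1, j) \<in> CL \<longrightarrow> (\<forall>a\<in>S (i, j). \<forall>b\<in>S (i + 1, j). a < b))"
    using assms unfolding SVT_def sum_cells mem_Collect_eq .
  note h2 = conjunct1[OF h] conjunct1[OF conjunct2[OF h]] conjunct1[OF conjunct2[OF conjunct2[OF h]]]
    conjunct1[OF conjunct2[OF conjunct2[OF conjunct2[OF h]]]]
    conjunct1[OF conjunct2[OF conjunct2[OF conjunct2[OF conjunct2[OF h]]]]]
    conjunct2[OF conjunct2[OF conjunct2[OF conjunct2[OF conjunct2[OF h]]]]]
  show "\<forall>c. c \<notin> CL \<longrightarrow> S c = {}" by (rule h2(1))
  show "\<forall>c\<in>CL. finite (S c) \<and> card (S c) = \<rho> c" by (rule h2(2))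
  show "\<forall>c\<in>CL. \<forall>d\<in>CL. c \<noteq> d \<longrightarrow> S c \<inter> S d = {}" by (rule h2(3))
  show "(\<Union>c\<in>CL. S c) = {1 .. NX}" by (rule h2(4))
  show "\<forall>i j. (i, j) \<in> CL \<and> (i, j + 1) \<in> CL \<longrightarrow> (\<forall>a\<in>S (i, j). \<forall>b\<in>S (i, j + 1). a < b)" by (rule h2(5))
  show "\<forall>i j. (i, j) \<in> CL \<and> (i + 1, j) \<in> CL \<longrightarrow> (\<forall>a\<in>S (i, j). \<forall>b\<in>S (i + 1, j). a < b)" by (rule h2(6))
qed

lemma SV_cell:
  assumes "S \<in> SV" "c \<in> CL"
  shows "S c \<subseteq> {1..NX}" "finite (S c)" "card (S c) = \<rho> c"
proof -
  show "S c \<subseteq> {1..NX}" using SV_unf(4)[OF assms(1)] assms(2) by blast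
  show "finite (S c)" "card (S c) = \<rho> c" using SV_unf(2)[OF assms(1)] assms(2) by blast+
qed

lemma SV_out: "S \<in> SV \<Longrightarrow> c \<notin> CL \<Longrightarrow> S c = {}"
  using SV_unf(1) by blast

lemma SV_disj: "S \<in> SV \<Longrightarrow> c \<in> CL \<Longrightarrow> d \<in> CL \<Longrightarrow> c \<noteq> d \<Longrightarrow> S c \<inter> S d = {}"
  using SV_unf(3) by blast

lemma SV_cover: "S \<in> SV \<Longrightarrow> x \<in> {1..NX} \<Longrightarrow> \<exists>c\<in>CL. x \<in> S c"
  using SV_unf(4) by blast

lemma SV_row:
  "S \<in> SV \<Longrightarrow> (i, j) \<in> CL \<Longrightarrow> (i, j + 1) \<in> CL \<Longrightarrow> a \<in> S (i, j) \<Longrightarrow> b \<in> S (i, j+1) \<Longrightarrow> a < b"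
  using SV_unf(5) by blast

lemma SV_col:
  "S \<in> SV \<Longrightarrow> (1, j) \<in> CL \<Longrightarrow> a \<in> S (1, j) \<Longrightarrow> b \<in> S (2, j) \<Longrightarrow> a < b"
proof -
  assume "S \<in> SV" "(1, j) \<in> CL" "a \<in> S (1, j)" "b \<in> S (2, j)"
  moreover have "(1+1, j) \<in> CL" using \<open>(1, j) \<in> CL\<close> by (simp add: memCL)
  ultimately have "\<forall>a\<in>S (1, j). \<forall>b\<in>S (1 + 1, j). a < b" using SV_unf(6)[of S] by blast
  thus "a < b" using \<open>a \<in> S (1, j)\<close> \<open>b \<in> S (2, j)\<close> by (simp add: numeral_2_eq_2)
qed

definition aa :: "(nat \<times> nat \<Rightarrow> nat set) \<Rightarrow> nat \<Rightarrow> nat" where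
  "aa S j = the_elem (S (1, j))"

lemma SV_a: assumes "S \<in> SV" "j \<in> {1..Suc n}" shows "S (1, j) = {aa S j}"
proof -
  have "(1,j) \<in> CL" using assms(2) by (simp add: memCL)
  from SV_cell(3)[OF assms(1) this] have "card (S (1,j)) = 1" by simp
  then obtain x where "S (1,j) = {x}" using card_1_singletonE by blast
  thus ?thesis unfolding aa_def by (metis the_elem_eq)
qed

lemma SV_a_range: assumes "S \<in> SV" "j \<in> {1..Suc n}" shows "aa S j \<in> {1..NX}"
proof -
  have "(1,j) \<in> CL" using assms(2) memCL by simp
  from SV_cell(1)[OF assms(1) this] show ?thesis unfolding SV_a[OF assms] by simp
qed

lemma SV_a_mono: assumes "S \<in> SV" "1 \<le> i" "i < j" "j \<le> Suc n" shows "aa S i < aa S j"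
  using assms(3,4)
proof (induction j)
  case 0 then show ?case by simp
next
  case (Suc j)
  have step: "aa S j < aa S (Suc j)"
    using SV_row[OF assms(1), of 1 j "aa S j" "aa S (Suc j)"] SV_a[OF assms(1), of j] SV_a[OF assms(1), of "Suc j"]
      Suc.prems assms(2) memCL by auto
  show ?case
  proof (cases "i = j")
    case True then show ?thesis using step by simp
  next
    case False then show ?thesis using Suc step by simp
  qed
qed

lemma SV_col': assumes "S \<in> SV" "j \<in> {1..Suc n}" "y \<in> S (2, j)" shows "aa S j < y"
  using SV_col[OF assms(1), of j "aa S j" y] SV_a[OF assms(1,2)] assms(2,3) memCL by auto

lemma SV_row2: assumes "S \<in> SV" "1 \<le> i" "i < j" "j \<le> Suc n" "x \<in> S (2, i)" "y \<in> S (2, j)"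
  shows "x < y"
  using assms(3,4,6)
proof (induction j arbitrary: y)
  case 0 then show ?case by simp
next
  case (Suc j)
  show ?case
  proof (cases "i = j")
    case True then show ?thesis
      using SV_row[OF assms(1), of 2 j x y] Suc.prems assms(2,5) memCL by auto
  next
    case False
    hence j: "i < j" "j \<ge> 2" using Suc.prems assms(2) by auto
    have "card (S (2, j)) = kk" using SV_cell(3)[OF assms(1), of "(2,j)"] j Suc.prems memCL by auto
    moreover have "kk > 0"
    proof (rule ccontr)
      assume "\<not> kk > 0"
      hence "card (S (2, Suc j)) = 0" using SV_cell(3)[OF assms(1), of "(2,Suc j)"] j Suc.prems memCL by auto
      moreover have "finite (S (2, Suc j))" using SV_cell(2)[OF assms(1), of "(2,Suc j)"] j Suc.prems memCL by auto
      ultimately show False using Suc.prems by auto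
    qed
    ultimately obtain z where z: "z \<in> S (2, j)" by (metis card.empty ex_in_conv less_irrefl)
    have "x < z" using Suc.IH[OF j(1) _ z] Suc.prems by simp
    moreover have "z < y" using SV_row[OF assms(1), of 2 j z y] Suc.prems z j memCL by auto
    ultimately show ?thesis by simp
  qed
qed


definition rowA :: "(nat \<times> nat \<Rightarrow> nat set) \<Rightarrow> nat set" where
  "rowA S = aa S ` {1..Suc n}"

lemma SV_a_inj: assumes "S \<in> SV" shows "inj_on (aa S) {1..Suc n}"
proof (rule inj_onI)
  fix i j assume ij: "i \<in> {1..Suc n}" "j \<in> {1..Suc n}" "aa S i = aa S j"
  show "i = j"
  proof (rule ccontr)
    assume "i \<noteq> j"
    hence "i < j \<or> j < i" by auto
    thus False using SV_a_mono[OF assms, of i j] SV_a_mono[OF assms, of j i] ij by auto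
  qed
qed

lemma SV_rowA_cases: assumes "S \<in> SV" "y \<in> {1..NX}"
  shows "y \<in> rowA S \<or> (\<exists>j\<in>{1..Suc n}. y \<in> S (2, j))"
proof -
  obtain c where c: "c \<in> CL" "y \<in> S c" using SV_cover[OF assms] by blast
  obtain i j where cij: "c = (i, j)" by (cases c)
  show ?thesis
  proof (cases "i = 1")
    case True
    hence "j \<in> {1..Suc n}" using c cij memCL by auto
    moreover have "y = aa S j" using SV_a[OF assms(1) calculation] c cij True by auto
    ultimately show ?thesis unfolding rowA_def by auto
  next
    case False
    hence "i = 2" "j \<in> {1..Suc n}" using c cij memCL by auto
    then show ?thesis using c cij by auto
  qed
qed

lemma SV_row2_notA: assumes "S \<in> SV" "j \<in> {1..Suc n}" "y \<in> S (2, j)"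
  shows "y \<notin> rowA S"
proof
  assume "y \<in> rowA S"
  then obtain i where i: "i \<in> {1..Suc n}" "y = aa S i" unfolding rowA_def by auto
  hence "y \<in> S (1, i)" using SV_a[OF assms(1) i(1)] by simp
  moreover have "S (1, i) \<inter> S (2, j) = {}" using SV_disj[OF assms(1), of "(1,i)" "(2,j)"] i assms(2) memCL by auto
  ultimately show False using assms(3) by auto
qed

lemma SV_row2_range: assumes "S \<in> SV" "j \<in> {1..Suc n}" shows "S (2, j) \<subseteq> {1..NX}" "finite (S (2,j))"
    "card (S (2, j)) = \<rho> (2, j)"
  using SV_cell[OF assms(1), of "(2,j)"] assms(2) memCL by auto

lemma fS_VA: assumes S: "S \<in> SV" shows "rowA S \<in> VA kk r' n"
proof -
  let ?A = "rowA S"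
  have sub: "?A \<subseteq> {1..NX}" using SV_a_range[OF S] unfolding rowA_def by auto
  have cardA: "card ?A = Suc n" unfolding rowA_def using card_image[OF SV_a_inj[OF S]] by simp
  have one: "1 \<in> ?A"
  proof -
    have "1 \<in> {1..NX}" by (simp add: NN_def)
    from SV_rowA_cases[OF S this] show ?thesis
    proof
      assume "\<exists>j\<in>{1..Suc n}. 1 \<in> S (2, j)"
      then obtain j where j: "j \<in> {1..Suc n}" "1 \<in> S (2, j)" by blast
      have "aa S j < 1" using SV_col'[OF S j] .
      moreover have "aa S j \<ge> 1" using SV_a_range[OF S j(1)] by simp
      ultimately show ?thesis by simp
    qed
  qed
  have valid: "card ({1..t} - ?A) \<le> hs kk r' (card (?A \<inter> {1..t}))" if t: "t \<le> NX" for t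
  proof -
    let ?u = "card (?A \<inter> {1..t})"
    have u: "?u \<le> Suc n" using cardA card_mono[of ?A "?A \<inter> {1..t}"] sub by (simp add: finite_subset)
    have "{1..t} - ?A \<subseteq> (\<Union>j\<in>{1..?u}. S (2, j))"
    proof
      fix y assume y: "y \<in> {1..t} - ?A"
      hence "y \<in> {1..NX}" using t by auto
      with SV_rowA_cases[OF S this] y obtain j where j: "j \<in> {1..Suc n}" "y \<in> S (2, j)" by blast
      have lt: "aa S j < y" using SV_col'[OF S j] .
      have "aa S ` {1..j} \<subseteq> ?A \<inter> {1..t}"
      proof
        fix z assume "z \<in> aa S ` {1..j}"
        then obtain i where i: "i \<in> {1..j}" "z = aa S i" by auto
        have "aa S i \<le> aa S j" using SV_a_mono[OF S, of i j] i j by (cases "i = j") auto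
        moreover have "aa S i \<ge> 1" using SV_a_range[OF S, of i] i j by auto
        moreover have "z \<in> ?A" using i j unfolding rowA_def by auto
        ultimately show "z \<in> ?A \<inter> {1..t}" using i lt y by auto
      qed
      moreover have "card (aa S ` {1..j}) = j"
        using card_image[OF inj_on_subset[OF SV_a_inj[OF S], of "{1..j}"]] j by auto
      ultimately have "j \<le> ?u" using card_mono[of "?A \<inter> {1..t}"] by (metis finite_Int finite_atLeastAtMost)
      thus "y \<in> (\<Union>j\<in>{1..?u}. S (2, j))" using j by auto
    qed
    hence "card ({1..t} - ?A) \<le> card (\<Union>j\<in>{1..?u}. S (2, j))"
      by (rule card_mono[rotated]) (use SV_row2_range[OF S] u in auto)
    also have "\<dots> \<le> (\<Sum>j\<in>{1..?u}. card (S (2, j)))" by (rule card_UN_le) simp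
    also have "\<dots> = hs kk r' ?u" unfolding hs_def
      by (rule sum.cong) (use SV_row2_range(3)[OF S] u in auto)
    finally show ?thesis .
  qed
  show ?thesis using sub cardA one valid unfolding VA_def by blast
qed


definition xsA :: "nat set \<Rightarrow> nat list" where "xsA A = sorted_list_of_set A"
definition ysA :: "nat set \<Rightarrow> nat list" where "ysA A = sorted_list_of_set ({1..NX} - A)"

definition gA :: "nat set \<Rightarrow> nat \<times> nat \<Rightarrow> nat set" where
  "gA A c = (if c \<in> CL then (if fst c = 1 then {xsA A ! (snd c - 1)}
      else (\<lambda>m. ysA A ! m) ` {hs kk r' (snd c - 1)..<hs kk r' (snd c)}) else {})"

lemma hs_diff: "j \<ge> 1 \<Longrightarrow> hs kk r' j = hs kk r' (j - 1) + \<rho> (2, j)"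
  using hs_Suc'[of kk r' "j - 1"] by simp

lemma SV_unique: assumes S: "S \<in> SV" shows "gA (rowA S) = S"
proof
  fix c
  let ?A = "rowA S"
  let ?C = "{1..NX} - ?A"
  let ?xs = "xsA ?A" and ?ys = "ysA ?A"
  have finA: "finite ?A" unfolding rowA_def by simp
  have xs: "set ?xs = ?A" "sorted_wrt (<) ?xs" "length ?xs = Suc n"
    using finA card_image[OF SV_a_inj[OF S]] by (auto simp: xsA_def rowA_def)
  have ys: "set ?ys = ?C" "sorted_wrt (<) ?ys"
    by (auto simp: ysA_def)
  show "gA ?A c = S c"
  proof (cases "c \<in> CL")
    case False then show ?thesis using SV_out[OF S False] by (simp add: gA_def)
  next
    case True
    then obtain i j where c: "c = (i, j)" "i = 1 \<or> i = 2" and j: "j \<in> {1..Suc n}"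
      using memCL by (cases c) auto
    show ?thesis
    proof (cases "i = 1")
      case True
      have "aa S j \<in> set ?xs" using xs(1) j unfolding rowA_def by auto
      then obtain m where m: "m < length ?xs" "?xs ! m = aa S j" by (auto simp: in_set_conv_nth)
      have "{y \<in> set ?xs. y < ?xs ! m} = aa S ` {1..<j}"
      proof
        show "{y \<in> set ?xs. y < ?xs ! m} \<subseteq> aa S ` {1..<j}"
        proof
          fix y assume "y \<in> {y \<in> set ?xs. y < ?xs ! m}"
          then obtain i' where i': "i' \<in> {1..Suc n}" "y = aa S i'" "aa S i' < aa S j"
            using xs(1) m(2) unfolding rowA_def by auto
          have "i' < j"
          proof (rule ccontr)
            assume "\<not> i' < j"
            hence "j < i' \<or> j = i'" by auto
            thus False using SV_a_mono[OF S, of j i'] i' j by auto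
          qed
          thus "y \<in> aa S ` {1..<j}" using i' by auto
        qed
        show "aa S ` {1..<j} \<subseteq> {y \<in> set ?xs. y < ?xs ! m}"
          using SV_a_mono[OF S, of _ j] j m(2) xs(1) unfolding rowA_def by auto
      qed
      hence "m = card (aa S ` {1..<j})" using rank_nth[OF xs(2) m(1)] by simp
      also have "\<dots> = j - 1"
      proof -
        have "{1..<j} \<subseteq> {1..Suc n}" using j by auto
        from card_image[OF inj_on_subset[OF SV_a_inj[OF S] this]] show ?thesis by simp
      qed
      finally have "?xs ! (j - 1) = aa S j" using m by simp
      then show ?thesis using True c j \<open>c \<in> CL\<close> SV_a[OF S j] by (simp add: gA_def)
    next
      case False
      hence i2: "i = 2" using c by simp
      let ?I = "{hs kk r' (j - 1)..<hs kk r' j}"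
      have g: "gA ?A c = (\<lambda>m. ?ys ! m) ` ?I" using \<open>c \<in> CL\<close> c i2 by (simp add: gA_def)
      have sub: "S (2, j) \<subseteq> (\<lambda>m. ?ys ! m) ` ?I"
      proof
        fix y assume y: "y \<in> S (2, j)"
        have yC: "y \<in> ?C" using SV_row2_range(1)[OF S j] y SV_row2_notA[OF S j y] by auto
        then obtain m where m: "m < length ?ys" "?ys ! m = y" using ys(1) by (metis in_set_conv_nth)
        have rk: "card {z \<in> ?C. z < y} = m" using rank_nth[OF ys(2) m(1)] m(2) ys(1) by simp
        have finC: "finite {z \<in> ?C. z < y}" by simp
        have lo: "hs kk r' (j - 1) \<le> m"
        proof -
          have "(\<Union>i\<in>{1..j-1}. S (2, i)) \<subseteq> {z \<in> ?C. z < y}"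
          proof
            fix z assume "z \<in> (\<Union>i\<in>{1..j-1}. S (2, i))"
            then obtain i' where i': "i' \<in> {1..j-1}" "z \<in> S (2, i')" by auto
            have "i' \<in> {1..Suc n}" using i' j by auto
            hence "z \<in> ?C" using SV_row2_range(1)[OF S] SV_row2_notA[OF S] i' by blast
            moreover have "z < y" using SV_row2[OF S, of i' j z y] i' j y by auto
            ultimately show "z \<in> {z \<in> ?C. z < y}" by simp
          qed
          hence "card (\<Union>i\<in>{1..j-1}. S (2, i)) \<le> m" using card_mono[OF finC] rk by metis
          moreover have "card (\<Union>i\<in>{1..j-1}. S (2, i)) = (\<Sum>i\<in>{1..j-1}. card (S (2, i)))"
          proof (rule card_UN_disjoint)
            show "\<forall>i\<in>{1..j - 1}. finite (S (2, i))" using SV_row2_range(2)[OF S] j by auto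
            show "\<forall>i\<in>{1..j - 1}. \<forall>i'\<in>{1..j - 1}. i \<noteq> i' \<longrightarrow> S (2, i) \<inter> S (2, i') = {}"
            proof (intro ballI impI)
              fix i i' assume ii: "i \<in> {1..j - 1}" "i' \<in> {1..j - 1}" "i \<noteq> i'"
              hence "(2, i) \<in> CL" "(2, i') \<in> CL" "(2, i) \<noteq> (2, i')" using j by (auto simp: memCL)
              from SV_disj[OF S this] show "S (2, i) \<inter> S (2, i') = {}" .
            qed
          qed simp
          moreover have "(\<Sum>i\<in>{1..j-1}. card (S (2, i))) = hs kk r' (j - 1)"
            unfolding hs_def by (rule sum.cong) (use SV_row2_range(3)[OF S] j in auto)
          ultimately show ?thesis by simp
        qed
        have hi: "m < hs kk r' j"
        proof -
          let ?U = "\<Union>i\<in>{1..j}. S (2, i)"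
          have finU: "finite ?U" using SV_row2_range(2)[OF S] j by auto
          have yU: "y \<in> ?U" using y j by auto
          have "{z \<in> ?C. z < y} \<subseteq> ?U - {y}"
          proof
            fix z assume z: "z \<in> {z \<in> ?C. z < y}"
            hence "z \<in> {1..NX}" "z \<notin> ?A" by auto
            then obtain i' where i': "i' \<in> {1..Suc n}" "z \<in> S (2, i')" using SV_rowA_cases[OF S] by blast
            have "i' \<le> j"
            proof (rule ccontr)
              assume "\<not> i' \<le> j"
              hence "y < z" using SV_row2[OF S, of j i' y z] i' j y by auto
              thus False using z by simp
            qed
            thus "z \<in> ?U - {y}" using i' z by auto
          qed
          from card_mono[OF finite_Diff[OF finU] this] have "m \<le> card (?U - {y})" unfolding rk .
          also have "\<dots> = card ?U - 1" using yU finU by simp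
          finally have m1: "m \<le> card ?U - 1" .
          have "card ?U \<le> (\<Sum>i\<in>{1..j}. card (S (2, i)))" by (rule card_UN_le) simp
          also have "(\<Sum>i\<in>{1..j}. card (S (2, i))) = hs kk r' j"
            unfolding hs_def by (rule sum.cong) (use SV_row2_range(3)[OF S] j in auto)
          finally have cU: "card ?U \<le> hs kk r' j" .
          have "card ?U \<noteq> 0" using yU finU by auto
          with m1 cU show ?thesis by linarith
        qed
        show "y \<in> (\<lambda>m. ?ys ! m) ` ?I" using lo hi m by force
      qed
      have "card ((\<lambda>m. ?ys ! m) ` ?I) \<le> card ?I" by (rule card_image_le) simp
      also have "\<dots> = \<rho> (2, j)" using hs_diff[of j] j by simp
      also have "\<dots> = card (S (2, j))" using SV_row2_range(3)[OF S j] by simp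
      finally have "S (2, j) = (\<lambda>m. ?ys ! m) ` ?I" using sub by (intro card_seteq) auto
      then show ?thesis using g c i2 by simp
    qed
  qed
qed


lemma hs_cover: "m < hs kk r' N \<Longrightarrow> \<exists>j. 1 \<le> j \<and> j \<le> N \<and> hs kk r' (j - 1) \<le> m \<and> m < hs kk r' j"
proof (induction N)
  case 0 then show ?case by simp
next
  case (Suc N)
  show ?case
  proof (cases "m < hs kk r' N")
    case True then show ?thesis using Suc.IH by (metis le_Suc_eq)
  next
    case False then show ?thesis using Suc.prems by (intro exI[of _ "Suc N"]) auto
  qed
qed

lemma gA_SV: assumes A: "A \<in> VA kk r' n" shows "gA A \<in> SV" "rowA (gA A) = A"
proof -
  let ?C = "{1..NX} - A"
  let ?xs = "xsA A" and ?ys = "ysA A"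
  have Asub: "A \<subseteq> {1..NX}" and one: "1 \<in> A" and cA: "card A = Suc n"
    and valid: "\<And>t. t \<le> NX \<Longrightarrow> card ({1..t} - A) \<le> hs kk r' (card (A \<inter> {1..t}))"
    using A unfolding VA_def by auto
  have finA: "finite A" using Asub finite_subset by blast
  have xs: "set ?xs = A" "sorted_wrt (<) ?xs" "length ?xs = Suc n" "distinct ?xs"
    using finA cA by (auto simp: xsA_def)
  have cC: "card ?C = hs kk r' (Suc n)"
    using card_Diff_subset[OF finA Asub] cA by (simp add: hs_Suc NN_def)
  have ys: "set ?ys = ?C" "sorted_wrt (<) ?ys" "length ?ys = hs kk r' (Suc n)" "distinct ?ys"
    using cC by (auto simp: ysA_def)
  have hsle: "\<And>j. j \<le> Suc n \<Longrightarrow> hs kk r' j \<le> length ?ys" using ys(3) hs_mono by simp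
  have g1: "\<And>j. j \<in> {1..Suc n} \<Longrightarrow> gA A (1, j) = {?xs ! (j - 1)}"
    by (simp add: gA_def memCL)
  have g2: "\<And>j. j \<in> {1..Suc n} \<Longrightarrow> gA A (2, j) = (\<lambda>m. ?ys ! m) ` {hs kk r' (j - 1)..<hs kk r' j}"
    by (simp add: gA_def memCL)
  have xsin: "\<And>j. j \<in> {1..Suc n} \<Longrightarrow> ?xs ! (j - 1) \<in> A"
  proof -
    fix j :: nat assume "j \<in> {1..Suc n}"
    hence "j - 1 < length ?xs" using xs(3) by auto
    thus "?xs ! (j - 1) \<in> A" using xs(1) nth_mem by blast
  qed
  have ysin: "\<And>m. m < length ?ys \<Longrightarrow> ?ys ! m \<in> ?C" using ys(1) nth_mem by blast
  have ysseg: "\<And>j m. j \<in> {1..Suc n} \<Longrightarrow> m \<in> {hs kk r' (j - 1)..<hs kk r' j} \<Longrightarrow> m < length ?ys"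
  proof -
    fix j m assume "j \<in> {1..Suc n}" "m \<in> {hs kk r' (j - 1)..<hs kk r' j}"
    thus "m < length ?ys" using hsle[of j] by auto
  qed
  show row: "rowA (gA A) = A"
  proof -
    have "aa (gA A) j = ?xs ! (j - 1)" if "j \<in> {1..Suc n}" for j
      using g1[OF that] by (simp add: aa_def)
    hence "rowA (gA A) = (\<lambda>j. ?xs ! (j - 1)) ` {1..Suc n}" unfolding rowA_def by simp
    also have "\<dots> = set ?xs"
    proof
      show "(\<lambda>j. ?xs ! (j - 1)) ` {1..Suc n} \<subseteq> set ?xs" using xs(1) xsin by auto
      show "set ?xs \<subseteq> (\<lambda>j. ?xs ! (j - 1)) ` {1..Suc n}"
      proof
        fix x assume "x \<in> set ?xs"
        then obtain m where "m < Suc n" "x = ?xs ! m" using xs(3) by (auto simp: in_set_conv_nth)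
        thus "x \<in> (\<lambda>j. ?xs ! (j - 1)) ` {1..Suc n}" by (intro image_eqI[of _ _ "Suc m"]) auto
      qed
    qed
    finally show ?thesis using xs(1) by simp
  qed
  have c_out: "\<forall>c. c \<notin> CL \<longrightarrow> gA A c = {}" by (simp add: gA_def)
  have c_card: "\<forall>c\<in>CL. finite (gA A c) \<and> card (gA A c) = \<rho> c"
  proof
    fix c assume c: "c \<in> CL"
    then obtain i j where ij: "c = (i, j)" "i = 1 \<or> i = 2" "j \<in> {1..Suc n}" using memCL by (cases c) auto
    show "finite (gA A c) \<and> card (gA A c) = \<rho> c"
    proof (cases "i = 1")
      case True then show ?thesis using ij g1 by simp
    next
      case False
      hence i2: "i = 2" using ij by simp
      have "inj_on (nth ?ys) {hs kk r' (j - 1)..<hs kk r' j}"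
        by (rule inj_on_nth[OF ys(4)]) (use ysseg[OF ij(3)] in blast)
      hence "card (gA A c) = hs kk r' j - hs kk r' (j - 1)" using g2[OF ij(3)] ij i2 by (simp add: card_image)
      also have "\<dots> = \<rho> c" using hs_diff[of j] ij i2 by simp
      finally show ?thesis using g2[OF ij(3)] ij i2 by simp
    qed
  qed
  have seg_lt: "\<And>j j' m m'. j \<in> {1..Suc n} \<Longrightarrow> j' \<in> {1..Suc n} \<Longrightarrow> j < j' \<Longrightarrow>
      m \<in> {hs kk r' (j - 1)..<hs kk r' j} \<Longrightarrow> m' \<in> {hs kk r' (j' - 1)..<hs kk r' j'} \<Longrightarrow> ?ys ! m < ?ys ! m'"
  proof -
    fix j j' m m' assume h: "j \<in> {1..Suc n}" "j' \<in> {1..Suc n}" "j < j'"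
      "m \<in> {hs kk r' (j - 1)..<hs kk r' j}" "m' \<in> {hs kk r' (j' - 1)..<hs kk r' j'}"
    have "hs kk r' j \<le> hs kk r' (j' - 1)" using hs_mono h(3) by simp
    hence "m < m'" using h(4,5) by simp
    thus "?ys ! m < ?ys ! m'" using sorted_wrt_nth_less[OF ys(2)] ysseg[OF h(2,5)] by blast
  qed
  have c_disj: "\<forall>c\<in>CL. \<forall>d\<in>CL. c \<noteq> d \<longrightarrow> gA A c \<inter> gA A d = {}"
  proof (intro ballI impI)
    fix c d assume cd: "c \<in> CL" "d \<in> CL" "c \<noteq> d"
    obtain i j where ij: "c = (i, j)" "i = 1 \<or> i = 2" "j \<in> {1..Suc n}" using cd(1) memCL by (cases c) auto
    obtain i' j' where ij': "d = (i', j')" "i' = 1 \<or> i' = 2" "j' \<in> {1..Suc n}" using cd(2) memCL by (cases d) auto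
    have r1: "\<And>j j'. j \<in> {1..Suc n} \<Longrightarrow> j' \<in> {1..Suc n} \<Longrightarrow> j \<noteq> j' \<Longrightarrow> ?xs ! (j - 1) \<noteq> ?xs ! (j' - 1)"
    proof -
      fix j j' :: nat assume h: "j \<in> {1..Suc n}" "j' \<in> {1..Suc n}" "j \<noteq> j'"
      hence "j - 1 < length ?xs" "j' - 1 < length ?xs" "j - 1 \<noteq> j' - 1" using xs(3) by auto
      thus "?xs ! (j - 1) \<noteq> ?xs ! (j' - 1)" using nth_eq_iff_index_eq[OF xs(4)] by blast
    qed
    have r12: "\<And>j j'. j \<in> {1..Suc n} \<Longrightarrow> j' \<in> {1..Suc n} \<Longrightarrow> gA A (1, j) \<inter> gA A (2, j') = {}"
      using g1 g2 xsin ysin ysseg by fastforce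
    have r22: "\<And>j j'. j \<in> {1..Suc n} \<Longrightarrow> j' \<in> {1..Suc n} \<Longrightarrow> j < j' \<Longrightarrow> gA A (2, j) \<inter> gA A (2, j') = {}"
    proof -
      fix j j' assume h: "j \<in> {1..Suc n}" "j' \<in> {1..Suc n}" "j < j'"
      show "gA A (2, j) \<inter> gA A (2, j') = {}"
        unfolding g2[OF h(1)] g2[OF h(2)] using seg_lt[OF h] by fastforce
    qed
    show "gA A c \<inter> gA A d = {}"
    proof (cases "i = 1")
      case True
      show ?thesis
      proof (cases "i' = 1")
        case True
        then show ?thesis using \<open>i = 1\<close> cd(3) ij ij' g1 r1 by auto
      next
        case False
        then show ?thesis using \<open>i = 1\<close> ij ij' r12 by auto
      qed
    next
      case False
      show ?thesis
      proof (cases "i' = 1")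
        case True
        then show ?thesis using \<open>i \<noteq> 1\<close> ij ij' r12 by auto
      next
        case False
        hence "j \<noteq> j'" using \<open>i \<noteq> 1\<close> cd(3) ij ij' by auto
        hence "j < j' \<or> j' < j" by auto
        then show ?thesis using \<open>i \<noteq> 1\<close> False ij ij' r22 by auto
      qed
    qed
  qed
  have c_union: "(\<Union>c\<in>CL. gA A c) = {1..NX}"
  proof
    show "(\<Union>c\<in>CL. gA A c) \<subseteq> {1..NX}"
    proof
      fix x assume "x \<in> (\<Union>c\<in>CL. gA A c)"
      then obtain c where c: "c \<in> CL" "x \<in> gA A c" by auto
      obtain i j where ij: "c = (i, j)" "i = 1 \<or> i = 2" "j \<in> {1..Suc n}" using c(1) memCL by (cases c) auto
      show "x \<in> {1..NX}"
      proof (cases "i = 1")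
        case True
        hence "x = ?xs ! (j - 1)" using c ij g1 by auto
        then show ?thesis using xsin[OF ij(3)] Asub by blast
      next
        case False then show ?thesis using c ij g2 ysin ysseg by fastforce
      qed
    qed
    show "{1..NX} \<subseteq> (\<Union>c\<in>CL. gA A c)"
    proof
      fix x assume x: "x \<in> {1..NX}"
      show "x \<in> (\<Union>c\<in>CL. gA A c)"
      proof (cases "x \<in> A")
        case True
        then obtain m where m: "m < Suc n" "x = ?xs ! m" using xs(1,3) by (metis in_set_conv_nth)
        hence "x \<in> gA A (1, Suc m)" using g1[of "Suc m"] by simp
        moreover have "(1, Suc m) \<in> CL" using m by (simp add: memCL)
        ultimately show ?thesis by blast
      next
        case False
        hence "x \<in> set ?ys" using x ys(1) by simp
        then obtain m where m: "m < length ?ys" "x = ?ys ! m" by (metis in_set_conv_nth)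
        then obtain j where j: "1 \<le> j" "j \<le> Suc n" "hs kk r' (j - 1) \<le> m" "m < hs kk r' j"
          using hs_cover[of m "Suc n"] ys(3) by auto
        hence "x \<in> gA A (2, j)" using g2[of j] m by auto
        moreover have "(2, j) \<in> CL" using j by (simp add: memCL)
        ultimately show ?thesis by blast
      qed
    qed
  qed
  have c_row: "\<forall>i j. (i, j) \<in> CL \<and> (i, j + 1) \<in> CL \<longrightarrow> (\<forall>a\<in>gA A (i, j). \<forall>b\<in>gA A (i, j + 1). a < b)"
  proof (intro allI impI ballI)
    fix i j a b assume h: "(i, j) \<in> CL \<and> (i, j + 1) \<in> CL" "a \<in> gA A (i, j)" "b \<in> gA A (i, j + 1)"
    have j: "j \<in> {1..Suc n}" "j + 1 \<in> {1..Suc n}" "i = 1 \<or> i = 2" using h(1) memCL by auto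
    show "a < b"
    proof (cases "i = 1")
      case True
      hence "a = ?xs ! (j - 1)" "b = ?xs ! j" using h g1 j by auto
      then show ?thesis using sorted_wrt_nth_less[OF xs(2), of "j - 1" j] j xs(3) by auto
    next
      case False
      hence "i = 2" using j by simp
      then obtain m m' where "m \<in> {hs kk r' (j - 1)..<hs kk r' j}" "a = ?ys ! m"
        "m' \<in> {hs kk r' (j + 1 - 1)..<hs kk r' (j + 1)}" "b = ?ys ! m'"
        using h g2[OF j(1)] g2[OF j(2)] by auto
      then show ?thesis using seg_lt[OF j(1,2)] by auto
    qed
  qed
  have c_col: "\<forall>i j. (i, j) \<in> CL \<and> (i + 1, j) \<in> CL \<longrightarrow> (\<forall>a\<in>gA A (i, j). \<forall>b\<in>gA A (i + 1, j). a < b)"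
  proof (intro allI impI ballI)
    fix i j a b assume h: "(i, j) \<in> CL \<and> (i + 1, j) \<in> CL" "a \<in> gA A (i, j)" "b \<in> gA A (i + 1, j)"
    have i1: "i = 1" and j: "j \<in> {1..Suc n}" using h(1) memCL by auto
    have a: "a = ?xs ! (j - 1)" using h(2) g1[OF j] i1 by simp
    have "b \<in> gA A (2, j)" using h(3) i1 by (simp add: numeral_2_eq_2)
    then obtain m where m: "m \<in> {hs kk r' (j - 1)..<hs kk r' j}" "b = ?ys ! m"
      using g2[OF j] by auto
    have aA: "a \<in> A" using xsin[OF j] a by simp
    have bC: "b \<in> ?C" using ysin[OF ysseg[OF j m(1)]] m(2) by simp
    show "a < b"
    proof (rule ccontr)
      assume "\<not> a < b"
      hence ba: "b < a" using aA bC by (cases "a = b") auto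
      show False
      proof (cases "j = 1")
        case True
        obtain p where p: "p < Suc n" "?xs ! p = 1" using one xs(1,3) by (metis in_set_conv_nth)
        have "a \<le> 1"
        proof (cases p)
          case 0 then show ?thesis using p a True by simp
        next
          case (Suc p') then show ?thesis using sorted_wrt_nth_less[OF xs(2), of 0 p] p a True xs(3) by simp
        qed
        moreover have "b \<ge> 1" using bC by simp
        ultimately show False using ba by simp
      next
        case False
        hence j2: "j \<ge> 2" using j by simp
        define t where "t = a - 1"
        have a1: "a \<ge> 1" "a \<le> NX" using aA Asub by auto
        hence t: "t \<le> NX" unfolding t_def by simp
        have "A \<inter> {1..t} = {y \<in> set ?xs. y < ?xs ! (j - 1)}"
          using xs(1) a a1 Asub unfolding t_def by auto
        moreover have "j - 1 < length ?xs" using xs(3) j by auto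
        ultimately have u: "card (A \<inter> {1..t}) = j - 1" using rank_nth[OF xs(2), of "j - 1"] by simp
        have "{z \<in> set ?ys. z < ?ys ! m} \<union> {b} \<subseteq> {1..t} - A"
          using ys(1) m(2) bC ba a1 unfolding t_def by auto
        hence "card ({z \<in> set ?ys. z < ?ys ! m} \<union> {b}) \<le> card ({1..t} - A)"
          by (intro card_mono) auto
        moreover have "card ({z \<in> set ?ys. z < ?ys ! m} \<union> {b}) = Suc m"
          using rank_nth[OF ys(2) ysseg[OF j m(1)]] m(2) by simp
        ultimately have "Suc m \<le> hs kk r' (j - 1)" using valid[OF t] u by simp
        thus False using m(1) by simp
      qed
    qed
  qed
  show "gA A \<in> SV"
    unfolding SVT_def mem_Collect_eq sum_cells
    using c_out c_card c_disj c_union c_row c_col by blast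
qed


lemma card_SV: "card SV = card (VA kk r' n)"
proof -
  have "bij_betw rowA SV (VA kk r' n)"
    by (rule bij_betw_byWitness[where f' = gA]) (auto simp: SV_unique fS_VA gA_SV)
  thus ?thesis by (rule bij_betw_same_card)
qed

end

theorem theorem3:
  fixes k r n :: nat
  assumes "k \<ge> 1" and "r \<ge> 1"
  shows "raney k r n = real (card (SVT [n + 1, n + 1] (rho_kr k r)))"
proof -
  obtain kk where k: "k = Suc kk" using assms(1) by (cases k) auto
  obtain r' where r: "r = Suc r'" using assms(2) by (cases r) auto
  have "raney k r n = real_of_int (Rz k n r)" using raney_Rz assms by simp
  also have "Rz k n r = int (card (Wd kk n r'))" using card_Wd[of kk n r'] k r by simp
  also have "card (Wd kk n r') = card (SVT [Suc n, Suc n] (rho_kr k r))"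
    using card_SV[of n kk r'] card_VA[of kk r' n] k r by simp
  finally show ?thesis by simp
qed


end
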